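(* Let $(\mathcal I,\mathcal O,\Delta)$ be a colorless task, $\mathcal C\subseteq\mathcal P_n(\mathcal I)$ a condition and $\mathcal H$ a core-dependent adversary on $\mathcal C$. Then for every $k\in\mathbb N$, the task is solvable on $\mathcal H_k$ if and only if it is solvable on $\mathcal H_0$.
   Context: Fix $n\ge 0$, processes $\Pi_n=\{0,\dots,n\}$. $ImS_n$ is the set of directed graphs $G$ on $\Pi_n$ containing all self-loops such that in-neighbourhoods $In_G(a)=\{b:(b,a)\in A(G)\}$ are totally ordered by inclusion and $(a,b),(b,c)\in A(G)\Rightarrow(a,c)\in A(G)$; $IIS_n=ImS_n^\omega$. In an execution $\iota.w$, $w=G_1G_2\cdots$, processes start with inputs from $\iota$, and in round $r$ process $q$ receives the state of $p$ iff $(p,q)\in A(G_r)$, then updates its state. A colorless task $(\mathcal I,\mathcal O,\Delta)$: abstract simplicial complexes $\mathcal I,\mathcal O$ and monotone carrier map $\Delta:\mathcal I\to2^{\mathcal O}$. $\mathcal P_n(\mathcal I)$: chromatic complex with vertices $\Pi_n\times V(\mathcal I)$, $\{(i_0,u_0),\dots,(i_d,u_d)\}$ (distinct $i_j$) a simplex iff $\{u_0,\dots,u_d\}\in\mathcal I$; $GIV$ forgets colors. The task is solvable on $\mathcal A\subseteq\mathcal P_n(\mathcal I)\times IIS_n$ if some algorithm makes, in every $\iota.w\in\mathcal A$, each process of $\iota$ decide a vertex of $\mathcal O$ after finitely many rounds with the decided set a simplex of $\Delta(GIV(\iota))$. For $w\in IIS_n$, $Q(w)$ is the set of processes heard by every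 process in infinitely many rounds. A core-dependent adversary $\mathcal H$ on a condition $\mathcal C\subseteq\mathcal P_n(\mathcal I)$ is given by, for each $\iota\in\mathcal C$, an inclusion-closed collection $P_\iota$ of subsets of $\Pi_n$: $\mathcal H=\{\iota.w:\iota\in\mathcal C,\ w\in IIS_n,\ \Pi_n\setminus Q(w)\in P_\iota\}$. For $k\in\mathbb N$, $\mathcal H_k$ is the set of $\iota.w\in\mathcal H$ such that for all $p\notin Q(w)$, $q\in Q(w)$ and all rounds $r>k$, $(p,q)\notin A(G_r)$. *)

theory Defs
  imports Main
begin

type_synonym graph = "(nat \<times> nat) set"

definition procs :: "nat \<Rightarrow> nat set" where
  "procs n = {0..n}"

definition In_G :: "graph \<Rightarrow> nat \<Rightarrow> nat set" where
  "In_G G a = {b. (b, a) \<in> G}"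

definition ImS :: "nat \<Rightarrow> graph set" where
  "ImS n = {G. G \<subseteq> procs n \<times> procs n
              \<and> (\<forall>a\<in>procs n. (a, a) \<in> G)
              \<and> (\<forall>a\<in>procs n. \<forall>b\<in>procs n. In_G G a \<subseteq> In_G G b \<or> In_G G b \<subseteq> In_G G a)
              \<and> (\<forall>a b c. (a, b) \<in> G \<longrightarrow> (b, c) \<in> G \<longrightarrow> (a, c) \<in> G)}"

text \<open>IIS_n = ImS_n^omega. A communication sequence w = G_1 G_2 ... is represented
  by a function w :: nat => graph with G_(r+1) = w r (round r+1 uses w r).\<close>
definition IIS :: "nat \<Rightarrow> (nat \<Rightarrow> graph) set" where
  "IIS n = {w. \<forall>r. w r \<in> ImS n}"

definition simplicial_complex :: "'a set set \<Rightarrow> bool" where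
  "simplicial_complex K \<longleftrightarrow>
     (\<forall>\<sigma>\<in>K. finite \<sigma> \<and> \<sigma> \<noteq> {}) \<and>
     (\<forall>\<sigma>\<in>K. \<forall>\<tau>. \<tau> \<subseteq> \<sigma> \<and> \<tau> \<noteq> {} \<longrightarrow> \<tau> \<in> K)"

definition carrier_map :: "'a set set \<Rightarrow> 'b set set \<Rightarrow> ('a set \<Rightarrow> 'b set set) \<Rightarrow> bool" where
  "carrier_map I Out \<Delta> \<longleftrightarrow>
     (\<forall>\<sigma>\<in>I. \<Delta> \<sigma> \<subseteq> Out \<and> simplicial_complex (\<Delta> \<sigma>)) \<and>
     (\<forall>\<sigma>\<in>I. \<forall>\<tau>\<in>I. \<sigma> \<subseteq> \<tau> \<longrightarrow> \<Delta> \<sigma> \<subseteq> \<Delta> \<tau>)"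

definition colorless_task :: "'a set set \<Rightarrow> 'b set set \<Rightarrow> ('a set \<Rightarrow> 'b set set) \<Rightarrow> bool" where
  "colorless_task I Out \<Delta> \<longleftrightarrow> simplicial_complex I \<and> simplicial_complex Out \<and> carrier_map I Out \<Delta>"

definition Pn :: "nat \<Rightarrow> 'a set set \<Rightarrow> (nat \<times> 'a) set set" where
  "Pn n I = {\<sigma>. finite \<sigma> \<and> \<sigma> \<noteq> {} \<and> fst ` \<sigma> \<subseteq> procs n \<and> inj_on fst \<sigma> \<and> snd ` \<sigma> \<in> I}"

definition GIV :: "(nat \<times> 'a) set \<Rightarrow> 'a set" where
  "GIV \<iota> = snd ` \<iota>"

definition input :: "(nat \<times> 'a) set \<Rightarrow> nat \<Rightarrow> 'a option" where
  "input \<iota> p = (if \<exists>u. (p, u) \<in> \<iota> then Some (THE u. (p, u) \<in> \<iota>) else None)"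

datatype 'a view = VInit nat "'a option" | VStep nat "(nat \<times> 'a view) list"

fun fi_view :: "nat \<Rightarrow> (nat \<times> 'a) set \<Rightarrow> (nat \<Rightarrow> graph) \<Rightarrow> nat \<Rightarrow> nat \<Rightarrow> 'a view" where
  "fi_view n \<iota> w p 0 = VInit p (input \<iota> p)"
| "fi_view n \<iota> w p (Suc r) =
     VStep p (map (\<lambda>q. (q, fi_view n \<iota> w q r)) (filter (\<lambda>q. (q, p) \<in> w r) [0..<Suc n]))"

text \<open>An algorithm is (w.l.o.g.) a full-information protocol with decision function
  \<delta>; a process decides irrevocably at the first round where \<delta> yields a value.\<close>
definition decision :: "nat \<Rightarrow> ('a view \<Rightarrow> 'b option) \<Rightarrow> (nat \<times> 'a) set \<Rightarrow> (nat \<Rightarrow> graph) \<Rightarrow> nat \<Rightarrow> 'b" where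
  "decision n \<delta> \<iota> w p = the (\<delta> (fi_view n \<iota> w p (LEAST r. \<delta> (fi_view n \<iota> w p r) \<noteq> None)))"

definition solvable ::
  "nat \<Rightarrow> ('a set \<Rightarrow> 'b set set) \<Rightarrow> ((nat \<times> 'a) set \<times> (nat \<Rightarrow> graph)) set \<Rightarrow> bool" where
  "solvable n \<Delta> A \<longleftrightarrow>
     (\<exists>\<delta> :: 'a view \<Rightarrow> 'b option. \<forall>(\<iota>, w)\<in>A.
        (\<forall>p\<in>fst ` \<iota>. \<exists>r. \<delta> (fi_view n \<iota> w p r) \<noteq> None) \<and>
        (decision n \<delta> \<iota> w) ` (fst ` \<iota>) \<in> \<Delta> (GIV \<iota>))"

definition Qset :: "nat \<Rightarrow> (nat \<Rightarrow> graph) \<Rightarrow> nat set" where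
  "Qset n w = {p\<in>procs n. \<forall>q\<in>procs n. \<exists>\<^sub>\<infinity>r. (p, q) \<in> w r}"

definition core_dependent :: "nat \<Rightarrow> (nat \<times> 'a) set set \<Rightarrow> ((nat \<times> 'a) set \<Rightarrow> nat set set) \<Rightarrow> bool" where
  "core_dependent n C P \<longleftrightarrow>
     (\<forall>\<iota>\<in>C. P \<iota> \<subseteq> Pow (procs n) \<and> (\<forall>S\<in>P \<iota>. \<forall>T. T \<subseteq> S \<longrightarrow> T \<in> P \<iota>))"

definition adversary :: "nat \<Rightarrow> (nat \<times> 'a) set set \<Rightarrow> ((nat \<times> 'a) set \<Rightarrow> nat set set)
    \<Rightarrow> ((nat \<times> 'a) set \<times> (nat \<Rightarrow> graph)) set" where
  "adversary n C P = {(\<iota>, w). \<iota> \<in> C \<and> w \<in> IIS n \<and> procs n - Qset n w \<in> P \<iota>}"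

text \<open>H_k: after round k no process outside Q(w) is heard by a process in Q(w).
  Round r (r \<ge> 1) uses graph w (r - 1).\<close>
definition adversary_k :: "nat \<Rightarrow> (nat \<times> 'a) set set \<Rightarrow> ((nat \<times> 'a) set \<Rightarrow> nat set set)
    \<Rightarrow> nat \<Rightarrow> ((nat \<times> 'a) set \<times> (nat \<Rightarrow> graph)) set" where
  "adversary_k n C P k = {(\<iota>, w) \<in> adversary n C P.
      \<forall>p\<in>procs n - Qset n w. \<forall>q\<in>Qset n w. \<forall>r. k < r \<longrightarrow> (p, q) \<notin> w (r - 1)}"

end

theory Submission
  imports Defs "HOL-Library.Infinite_Set"
begin

fun owner :: "'a view \<Rightarrow> nat" where
  "owner (VInit p x) = p"
| "owner (VStep p l) = p"

fun inpf :: "nat \<Rightarrow> 'a view \<Rightarrow> 'a option" where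
  "inpf m (VInit p x) = x"
| "inpf 0 (VStep p l) = None"
| "inpf (Suc m) (VStep p l) = (case map_of l p of Some u \<Rightarrow> inpf m u | None \<Rightarrow> None)"

fun vdepth :: "'a view \<Rightarrow> nat" where
  "vdepth (VInit p x) = 0"
| "vdepth (VStep p []) = 1"
| "vdepth (VStep p ((q, v) # rest)) = Suc (vdepth v)"

fun strip :: "nat \<Rightarrow> nat \<Rightarrow> 'a view \<Rightarrow> 'a view" where
  "strip k 0 v = VInit (owner v) (inpf k v)"
| "strip k (Suc r) (VInit p x) = VInit p x"
| "strip k (Suc r) (VStep p l) = VStep p (map (\<lambda>(q, u). (q, strip k r u)) l)"

lemma map_of_map_in: "p \<in> set xs \<Longrightarrow> map_of (map (\<lambda>q. (q, F q)) xs) p = Some (F p)"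
  by (induction xs) auto

lemma selfloop: "w \<in> IIS n \<Longrightarrow> p \<in> procs n \<Longrightarrow> (p, p) \<in> w r"
  unfolding IIS_def ImS_def by blast

lemma procs_iff: "p \<in> procs n \<longleftrightarrow> p < Suc n"
  unfolding procs_def by auto

lemma owner_fi: "owner (fi_view n \<iota> w p r) = p"
  by (cases r) auto

lemma inpf_fi:
  assumes "w \<in> IIS n"
  shows "p \<in> procs n \<Longrightarrow> r \<le> m \<Longrightarrow> inpf m (fi_view n \<iota> w p r) = input \<iota> p"
proof (induction r arbitrary: m)
  case 0
  then show ?case by simp
next
  case (Suc r)
  then obtain m' where m: "m = Suc m'" by (cases m) auto
  have "p \<in> set (filter (\<lambda>q. (q, p) \<in> w r) [0..<Suc n])"
  proof -
    have "(p, p) \<in> w r" using selfloop[OF assms Suc.prems(1)] .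
    moreover have "p < Suc n" using Suc.prems(1) procs_iff by blast
    ultimately show ?thesis by (simp only: set_filter set_upt) auto
  qed
  then have "map_of (map (\<lambda>q. (q, fi_view n \<iota> w q r)) (filter (\<lambda>q. (q, p) \<in> w r) [0..<Suc n])) p
     = Some (fi_view n \<iota> w p r)" by (rule map_of_map_in)
  then show ?case using Suc m by simp
qed

lemma vdepth_fi:
  assumes "w \<in> IIS n"
  shows "p \<in> procs n \<Longrightarrow> vdepth (fi_view n \<iota> w p r) = r"
proof (induction r arbitrary: p)
  case 0
  then show ?case by simp
next
  case (Suc r)
  have "p \<in> set (filter (\<lambda>q. (q, p) \<in> w r) [0..<Suc n])"
  proof -
    have "(p, p) \<in> w r" using selfloop[OF assms Suc.prems(1)] .
    moreover have "p < Suc n" using Suc.prems(1) procs_iff by blast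
    ultimately show ?thesis by (simp only: set_filter set_upt) auto
  qed
  then have "filter (\<lambda>q. (q, p) \<in> w r) [0..<Suc n] \<noteq> []" by (metis empty_iff list.set(1))
  then obtain q rest where ql: "filter (\<lambda>q. (q, p) \<in> w r) [0..<Suc n] = q # rest"
    by (meson neq_Nil_conv)
  then have "q \<in> set (filter (\<lambda>q. (q, p) \<in> w r) [0..<Suc n])" by simp
  then have "q < Suc n" by (simp only: set_filter set_upt) auto
  then have "q \<in> procs n" using procs_iff by blast
  then show ?case using ql Suc.IH by simp
qed

lemma strip_fi:
  assumes "w \<in> IIS n"
  shows "p \<in> procs n \<Longrightarrow> strip k r (fi_view n \<iota> w p (r + k)) = fi_view n \<iota> (\<lambda>i. w (i + k)) p r"
proof (induction r arbitrary: p)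
  case 0
  then show ?case by (simp add: owner_fi inpf_fi[OF assms])
next
  case (Suc r)
  have "strip k (Suc r) (fi_view n \<iota> w p (Suc r + k)) =
     VStep p (map (\<lambda>q. (q, strip k r (fi_view n \<iota> w q (r + k)))) (filter (\<lambda>q. (q, p) \<in> w (r + k)) [0..<Suc n]))"
    by simp
  also have "\<dots> = VStep p (map (\<lambda>q. (q, fi_view n \<iota> (\<lambda>i. w (i + k)) q r)) (filter (\<lambda>q. (q, p) \<in> w (r + k)) [0..<Suc n]))"
    using Suc.IH procs_iff by (auto intro!: map_cong)
  finally show ?case by simp
qed

definition dshift :: "nat \<Rightarrow> ('a view \<Rightarrow> 'b option) \<Rightarrow> 'a view \<Rightarrow> 'b option" where
  "dshift k \<delta> v = (if k \<le> vdepth v then \<delta> (strip k (vdepth v - k) v) else None)"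

lemma dshift_fi:
  assumes "w \<in> IIS n" "p \<in> procs n"
  shows "dshift k \<delta> (fi_view n \<iota> w p r) = (if k \<le> r then \<delta> (fi_view n \<iota> (\<lambda>i. w (i + k)) p (r - k)) else None)"
proof (cases "k \<le> r")
  case True
  then have "r = (r - k) + k" by simp
  then have "strip k (r - k) (fi_view n \<iota> w p r) = fi_view n \<iota> (\<lambda>i. w (i + k)) p (r - k)"
    using strip_fi[OF assms(1) assms(2), of k "r - k" \<iota>] by simp
  then show ?thesis using True unfolding dshift_def by (simp add: vdepth_fi[OF assms])
next
  case False
  then show ?thesis unfolding dshift_def by (simp add: vdepth_fi[OF assms])
qed

lemma least_shift:
  fixes f g :: "nat \<Rightarrow> 'b option"
  assumes "\<And>r. r < k \<Longrightarrow> f r = None" "\<And>s. f (s + k) = g s" "\<exists>s. g s \<noteq> None"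
  shows "(LEAST r. f r \<noteq> None) = (LEAST s. g s \<noteq> None) + k"
proof (rule Least_equality)
  show "f ((LEAST s. g s \<noteq> None) + k) \<noteq> None"
    using assms(2) LeastI_ex[OF assms(3)] by simp
next
  fix y assume y: "f y \<noteq> None"
  then have "k \<le> y" using assms(1) by (meson not_le)
  then have "g (y - k) \<noteq> None" using y assms(2)[of "y - k"] by simp
  then have "(LEAST s. g s \<noteq> None) \<le> y - k" by (rule Least_le)
  then show "(LEAST s. g s \<noteq> None) + k \<le> y" using \<open>k \<le> y\<close> by simp
qed

lemma Qset_shift: "Qset n (\<lambda>i. w (i + k)) = Qset n w"
proof -
  have sh: "(\<exists>\<^sub>\<infinity>i. Q (i + k)) \<longleftrightarrow> (\<exists>\<^sub>\<infinity>i. Q i)" for Q :: "nat \<Rightarrow> bool"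
    unfolding INFM_nat
  proof
    assume a: "\<forall>m. \<exists>n>m. Q (n + k)"
    show "\<forall>m. \<exists>n>m. Q n"
    proof
      fix m obtain j where "j > m" "Q (j + k)" using a by blast
      then show "\<exists>n>m. Q n" by (intro exI[of _ "j + k"]) auto
    qed
  next
    assume a: "\<forall>m. \<exists>n>m. Q n"
    show "\<forall>m. \<exists>n>m. Q (n + k)"
    proof
      fix m obtain j where "j > m + k" "Q j" using a by blast
      then show "\<exists>n>m. Q (n + k)" by (intro exI[of _ "j - k"]) auto
    qed
  qed
  have "\<forall>p q. (\<exists>\<^sub>\<infinity>r. (p, q) \<in> w (r + k)) \<longleftrightarrow> (\<exists>\<^sub>\<infinity>r. (p, q) \<in> w r)"
    by (intro allI) (rule sh)
  then show ?thesis unfolding Qset_def by simp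
qed

lemma solvable_mono: "A \<subseteq> B \<Longrightarrow> solvable n \<Delta> B \<Longrightarrow> solvable n \<Delta> A"
  unfolding solvable_def
  apply (erule exE, rule exI)
  apply (rule ballI)
  apply (erule bspec)
  apply (erule subsetD, assumption)
  done

lemma H0_sub: "adversary_k n C P 0 \<subseteq> adversary_k n C P k"
  unfolding adversary_k_def by auto

lemma shift_in_H0:
  assumes "(\<iota>, w) \<in> adversary_k n C P k"
  shows "(\<iota>, (\<lambda>i. w (i + k))) \<in> adversary_k n C P 0"
proof -
  have w: "w \<in> IIS n" "\<iota> \<in> C" "procs n - Qset n w \<in> P \<iota>"
    using assms unfolding adversary_k_def adversary_def by simp_all
  have H: "\<forall>p\<in>procs n - Qset n w. \<forall>q\<in>Qset n w. \<forall>r. k < r \<longrightarrow> (p, q) \<notin> w (r - 1)"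
    using assms unfolding adversary_k_def by simp
  have W: "(\<lambda>i. w (i + k)) \<in> IIS n" using w(1) unfolding IIS_def by simp
  have R: "\<forall>p\<in>procs n - Qset n w. \<forall>q\<in>Qset n w. \<forall>r. 0 < r \<longrightarrow> (p, q) \<notin> w (r - 1 + k)"
  proof (intro ballI allI impI)
    fix p q r assume pq: "p \<in> procs n - Qset n w" "q \<in> Qset n w" "0 < (r::nat)"
    have "k < r - 1 + k + 1" by simp
    then have "(p, q) \<notin> w ((r - 1 + k + 1) - 1)" using H pq(1,2) by blast
    then show "(p, q) \<notin> w (r - 1 + k)" by simp
  qed
  have Q: "Qset n (\<lambda>i. w (i + k)) = Qset n w" by (rule Qset_shift)
  show ?thesis unfolding adversary_k_def adversary_def
    using W w R by (simp add: Q)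
qed

theorem mainTheorem6:
  fixes n :: nat
    and I :: "'a set set" and Out :: "'b set set" and \<Delta> :: "'a set \<Rightarrow> 'b set set"
    and C :: "(nat \<times> 'a) set set" and P :: "(nat \<times> 'a) set \<Rightarrow> nat set set"
  assumes "colorless_task I Out \<Delta>"
    and "C \<subseteq> Pn n I"
    and "core_dependent n C P"
  shows "\<forall>k::nat. solvable n \<Delta> (adversary_k n C P k) \<longleftrightarrow> solvable n \<Delta> (adversary_k n C P 0)"
proof
  fix k
  show "solvable n \<Delta> (adversary_k n C P k) \<longleftrightarrow> solvable n \<Delta> (adversary_k n C P 0)"
  proof
    assume "solvable n \<Delta> (adversary_k n C P k)"
    then show "solvable n \<Delta> (adversary_k n C P 0)" using solvable_mono[OF H0_sub] by blast
  next
    assume "solvable n \<Delta> (adversary_k n C P 0)"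
    then obtain \<delta> :: "'a view \<Rightarrow> 'b option" where d: "\<forall>(\<iota>, w)\<in>adversary_k n C P 0.
        (\<forall>p\<in>fst ` \<iota>. \<exists>r. \<delta> (fi_view n \<iota> w p r) \<noteq> None) \<and>
        (decision n \<delta> \<iota> w) ` (fst ` \<iota>) \<in> \<Delta> (GIV \<iota>)"
      unfolding solvable_def by blast
    show "solvable n \<Delta> (adversary_k n C P k)"
      unfolding solvable_def
    proof (intro exI[of _ "dshift k \<delta>"] ballI, clarify)
      fix \<iota> w assume iw: "(\<iota>, w) \<in> adversary_k n C P k"
      define w' where "w' = (\<lambda>i. w (i + k))"
      have iw': "(\<iota>, w') \<in> adversary_k n C P 0" using shift_in_H0[OF iw] w'_def by simp
      have wI: "w \<in> IIS n" "\<iota> \<in> C" using iw unfolding adversary_k_def adversary_def by auto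
      have pp: "p \<in> procs n" if "p \<in> fst ` \<iota>" for p
        using that wI(2) assms(2) unfolding Pn_def by auto
      have D: "(\<forall>p\<in>fst ` \<iota>. \<exists>r. \<delta> (fi_view n \<iota> w' p r) \<noteq> None) \<and>
        (decision n \<delta> \<iota> w') ` (fst ` \<iota>) \<in> \<Delta> (GIV \<iota>)"
        using bspec[OF d iw'] by simp
      have ex: "\<exists>r. \<delta> (fi_view n \<iota> w' p r) \<noteq> None" if "p \<in> fst ` \<iota>" for p
        using D that by blast
      have fe: "dshift k \<delta> (fi_view n \<iota> w p r) = (if k \<le> r then \<delta> (fi_view n \<iota> w' p (r - k)) else None)"
        if "p \<in> fst ` \<iota>" for p r
        unfolding w'_def by (rule dshift_fi[OF wI(1) pp[OF that]])
      have dec: "decision n (dshift k \<delta>) \<iota> w p = decision n \<delta> \<iota> w' p" if "p \<in> fst ` \<iota>" for p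
      proof -
        have L: "(LEAST r. dshift k \<delta> (fi_view n \<iota> w p r) \<noteq> None) = (LEAST s. \<delta> (fi_view n \<iota> w' p s) \<noteq> None) + k"
          by (rule least_shift) (use fe[OF that] ex[OF that] in auto)
        have "decision n (dshift k \<delta>) \<iota> w p = the (dshift k \<delta> (fi_view n \<iota> w p ((LEAST s. \<delta> (fi_view n \<iota> w' p s) \<noteq> None) + k)))"
          unfolding decision_def L ..
        also have "\<dots> = decision n \<delta> \<iota> w' p"
          unfolding decision_def by (simp add: fe[OF that])
        finally show ?thesis .
      qed
      show "(\<forall>p\<in>fst ` \<iota>. \<exists>r. dshift k \<delta> (fi_view n \<iota> w p r) \<noteq> None) \<and>
            decision n (dshift k \<delta>) \<iota> w ` fst ` \<iota> \<in> \<Delta> (GIV \<iota>)"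
      proof
        show "\<forall>p\<in>fst ` \<iota>. \<exists>r. dshift k \<delta> (fi_view n \<iota> w p r) \<noteq> None"
        proof
          fix p assume p: "p \<in> fst ` \<iota>"
          obtain s where "\<delta> (fi_view n \<iota> w' p s) \<noteq> None" using ex[OF p] by blast
          then show "\<exists>r. dshift k \<delta> (fi_view n \<iota> w p r) \<noteq> None"
            using fe[OF p, of "s + k"] by (intro exI[of _ "s + k"]) simp
        qed
        have "decision n (dshift k \<delta>) \<iota> w ` fst ` \<iota> = decision n \<delta> \<iota> w' ` fst ` \<iota>"
          using dec by (auto simp: image_def)
        then show "decision n (dshift k \<delta>) \<iota> w ` fst ` \<iota> \<in> \<Delta> (GIV \<iota>)"
          using D by simp
      qed
    qed
  qed
qed

end
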